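(* Let $m,d\in\mathbb N$. Let $H$ be a bipartite graph with vertex classes $X$ and $Y$ such that any two sets $X'\subseteq X$, $Y'\subseteq Y$ with $|X'|=|Y'|=m$ have an edge between them. If $|Y|\ge (3d+4)m$, then there is a set $B\subseteq X$ with $|B|\le m$ such that every $U\subseteq X\setminus B$ with $|U|\le 2m$ satisfies $|N(U)|\ge d|U|$.
   Context: For $U\subseteq V(H)$, $N(U)=\big(\bigcup_{u\in U}N(u)\big)\setminus U$ is the exterior neighbourhood in $H$. *)

theory Defs
  imports Main
begin

definition bipartite_graph :: "'a set \<Rightarrow> 'a set \<Rightarrow> ('a \<Rightarrow> 'a \<Rightarrow> bool) \<Rightarrow> bool" where
  "bipartite_graph X Y E \<longleftrightarrow>
     finite X \<and> finite Y \<and> X \<inter> Y = {} \<and>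
     (\<forall>u v. E u v \<longrightarrow> E v u) \<and>
     (\<forall>u v. E u v \<longrightarrow> (u \<in> X \<and> v \<in> Y) \<or> (u \<in> Y \<and> v \<in> X))"

definition nbr :: "'a set \<Rightarrow> ('a \<Rightarrow> 'a \<Rightarrow> bool) \<Rightarrow> 'a \<Rightarrow> 'a set" where
  "nbr V E u = {v \<in> V. E u v}"

definition ext_nbhd :: "'a set \<Rightarrow> ('a \<Rightarrow> 'a \<Rightarrow> bool) \<Rightarrow> 'a set \<Rightarrow> 'a set" where
  "ext_nbhd V E U = (\<Union>u\<in>U. nbr V E u) - U"

end

theory Submission
  imports Defs
begin

lemma N_sub_Y:
  assumes H: "bipartite_graph X Y E" and S: "S \<subseteq> X"
  shows "ext_nbhd (X \<union> Y) E S \<subseteq> Y"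
  using assms unfolding bipartite_graph_def ext_nbhd_def nbr_def by blast

lemma N_fin:
  assumes H: "bipartite_graph X Y E"
  shows "finite (ext_nbhd (X \<union> Y) E S)"
proof -
  have "ext_nbhd (X \<union> Y) E S \<subseteq> X \<union> Y" unfolding ext_nbhd_def nbr_def by blast
  thus ?thesis using H unfolding bipartite_graph_def by (meson finite_UnI finite_subset)
qed

lemma N_noedge:
  assumes H: "bipartite_graph X Y E" and S: "S \<subseteq> X" and x: "x \<in> S"
    and y: "y \<in> Y - ext_nbhd (X \<union> Y) E S"
  shows "\<not> E x y"
  using assms unfolding bipartite_graph_def ext_nbhd_def nbr_def by blast

lemma N_union:
  "ext_nbhd V E (A \<union> B) \<subseteq> ext_nbhd V E A \<union> ext_nbhd V E B"
  unfolding ext_nbhd_def by blast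

lemma big_ok:
  fixes X Y :: "'a set" and E :: "'a \<Rightarrow> 'a \<Rightarrow> bool" and m d :: nat
  assumes H: "bipartite_graph X Y E"
    and dense: "\<forall>X' Y'. X' \<subseteq> X \<and> Y' \<subseteq> Y \<and> card X' = m \<and> card Y' = m
                  \<longrightarrow> (\<exists>x\<in>X'. \<exists>y\<in>Y'. E x y)"
    and sizeY: "card Y \<ge> (3 * d + 4) * m"
    and S: "S \<subseteq> X" "card S \<le> 3 * m" "card S \<ge> m"
  shows "card (ext_nbhd (X \<union> Y) E S) \<ge> d * card S"
proof (rule ccontr)
  let ?N = "ext_nbhd (X \<union> Y) E S"
  assume "\<not> ?thesis"
  hence lt: "card ?N < d * card S" by simp
  have "d * card S \<le> d * (3*m)" using S(2) by (rule mult_le_mono2)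
  then have "card ?N \<le> d * (3*m)" using lt by linarith
  then have c1: "card ?N \<le> 3 * d * m" by (simp add: mult.commute mult.left_commute)
  have c2: "card (Y - ?N) \<ge> card Y - card ?N" by (rule diff_card_le_card_Diff) (rule N_fin[OF H])
  have "(3 * d + 4) * m = 3 * d * m + 4 * m" by (simp add: add_mult_distrib)
  hence "card Y - card ?N \<ge> m" using sizeY c1 by linarith
  hence "card (Y - ?N) \<ge> m" using c2 by linarith
  then obtain Y' where Y': "Y' \<subseteq> Y - ?N" "card Y' = m" by (meson obtain_subset_with_card_n)
  obtain X' where X': "X' \<subseteq> S" "card X' = m" using S(3) by (meson obtain_subset_with_card_n)
  have "X' \<subseteq> X" using X'(1) S(1) by (rule subset_trans)
  moreover have "Y' \<subseteq> Y" using Y'(1) by blast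
  ultimately have "\<exists>x\<in>X'. \<exists>y\<in>Y'. E x y" using dense X'(2) Y'(2) by blast
  then obtain x y where "x \<in> X'" "y \<in> Y'" "E x y" by blast
  thus False using N_noedge[OF H S(1), of x y] X' Y' by blast
qed

theorem proposition3p37:
  fixes X Y :: "'a set" and E :: "'a \<Rightarrow> 'a \<Rightarrow> bool" and m d :: nat
  assumes H: "bipartite_graph X Y E"
    and dense: "\<forall>X' Y'. X' \<subseteq> X \<and> Y' \<subseteq> Y \<and> card X' = m \<and> card Y' = m
                  \<longrightarrow> (\<exists>x\<in>X'. \<exists>y\<in>Y'. E x y)"
    and sizeY: "card Y \<ge> (3 * d + 4) * m"
  shows "\<exists>B. B \<subseteq> X \<and> card B \<le> m \<and>
           (\<forall>U. U \<subseteq> X - B \<and> card U \<le> 2 * m \<longrightarrow>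
                card (ext_nbhd (X \<union> Y) E U) \<ge> d * card U)"
proof -
  have finX: "finite X" using H unfolding bipartite_graph_def by blast
  define F where "F = {S. S \<subseteq> X \<and> card S \<le> m \<and> card (ext_nbhd (X \<union> Y) E S) \<le> d * card S}"
  have "{} \<in> F" unfolding F_def ext_nbhd_def by simp
  have finF: "finite F" unfolding F_def using finX by (simp add: finite_Collect_subsets)
  obtain B where B: "B \<in> F" "\<forall>S\<in>F. card S \<le> card B"
  proof -
    have "\<forall>y. y \<in> F \<longrightarrow> card y < Suc (card X)"
    proof (intro allI impI)
      fix y assume "y \<in> F"
      hence "y \<subseteq> X" unfolding F_def by blast
      hence "card y \<le> card X" using finX by (rule card_mono[rotated])
      thus "card y < Suc (card X)" by (rule le_imp_less_Suc)
    qed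
    from ex_has_greatest_nat[of "\<lambda>S. S \<in> F" "{}" card "Suc (card X)", OF \<open>{} \<in> F\<close> this]
    obtain B where B1: "B \<in> F" and B2: "\<forall>y. y \<in> F \<longrightarrow> card y \<le> card B" by blast
    show ?thesis by (rule that[OF B1]) (use B2 in blast)
  qed
  have BX: "B \<subseteq> X" and Bm: "card B \<le> m" and NB: "card (ext_nbhd (X \<union> Y) E B) \<le> d * card B"
    using B(1) unfolding F_def by auto
  show ?thesis
  proof (intro exI conjI allI impI)
    fix U assume U: "U \<subseteq> X - B \<and> card U \<le> 2 * m"
    show "card (ext_nbhd (X \<union> Y) E U) \<ge> d * card U"
    proof (rule ccontr)
      assume "\<not> ?thesis"
      hence NU: "card (ext_nbhd (X \<union> Y) E U) < d * card U" by simp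
      let ?S = "B \<union> U"
      have finU: "finite U" using U finX by (meson Diff_subset finite_subset)
      have finB: "finite B" using BX finX finite_subset by blast
      have cS: "card ?S = card B + card U" using U by (intro card_Un_disjoint[OF finB finU]) blast
      have "card (ext_nbhd (X \<union> Y) E ?S) \<le> card (ext_nbhd (X \<union> Y) E B \<union> ext_nbhd (X \<union> Y) E U)"
        by (rule card_mono) (simp_all add: N_fin[OF H] N_union)
      also have "\<dots> \<le> card (ext_nbhd (X \<union> Y) E B) + card (ext_nbhd (X \<union> Y) E U)" by (rule card_Un_le)
      finally have NS: "card (ext_nbhd (X \<union> Y) E ?S) < d * card ?S" using NB NU cS
        by (simp add: algebra_simps)
      have SX: "?S \<subseteq> X" using BX U by blast
      show False
      proof (cases "card ?S \<ge> m")
        case True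
        have "card ?S \<le> 3 * m" using cS Bm U by simp
        thus False using big_ok[OF H dense sizeY SX _ True] NS by simp
      next
        case False
        hence "?S \<in> F" using SX NS unfolding F_def by simp
        hence "card ?S \<le> card B" using B(2) by blast
        moreover have "U \<noteq> {}" using NU by auto
        hence "card U > 0" using finU by auto
        ultimately show False using cS by simp
      qed
    qed
  qed (use BX Bm in auto)
qed

end
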